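(* Fix any ordering $e_1,\dots,e_n$ of $V$. Let $D\subseteq V$ be a dense set and let $\mathcal O$ be a set with $|\mathcal O|\le k$ and $f(\mathcal O)=\mathrm{OPT}$. Suppose that (1) $|D_L|\le0.95\,\eta k$, (2) $f(D_L)\ge0.85\,f(D)$, (3) $|\mathcal O_R|\le0.15\,k$, and (4) $f(\mathcal O_R\mid D)\ge0.05\,f(\mathcal O\mid D)$. Then the output $S$ of Algorithm 1 on this stream satisfies $f(S)\ge0.50025\cdot\mathrm{OPT}$.
   Context: $V$ is a finite ground set with $|V|=n$; $f:2^V\to\mathbb{R}_{\ge0}$ is monotone, submodular and normalized ($f(\emptyset)=0$); $f(X\mid Y)=f(X\cup Y)-f(Y)$, $f(e\mid Y)=f(\{e\}\mid Y)$. $k\le n$ is a positive integer and $\mathrm{OPT}=\max\{f(S):S\subseteq V,|S|\le k\}$. A set $D$ is dense if $|D|\le\eta k$ and $f(D)\ge\frac{1-\gamma}{2}\mathrm{OPT}$, where $\gamma=10^{-2}$, $\eta=5\cdot10^{-5}$. For $T\subseteq V$, $T_L$ is the set of elements of $T$ at positions $i\le0.9n$ and $T_R=T\setminus T_L$. Algorithm 1 (knows $\mathrm{OPT}$): start with $S=\emptyset$; for $i=1,\dots,n$, add $e_i$ to $S$ if $|S|<k$ and either ($i\le 0.9n$ and $f(e_i\mid S)\ge\frac{100}{k}\mathrm{OPT}$) or ($i>0.9n$ and $f(e_i\mid S)\ge\frac{1}{10k}\mathrm{OPT}$); return $S$. *)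

theory Defs
  imports Complex_Main
begin

definition monotone_sf :: "'a set \<Rightarrow> ('a set \<Rightarrow> real) \<Rightarrow> bool" where
  "monotone_sf V f \<longleftrightarrow> (\<forall>A B. A \<subseteq> B \<and> B \<subseteq> V \<longrightarrow> f A \<le> f B)"

definition submodular :: "'a set \<Rightarrow> ('a set \<Rightarrow> real) \<Rightarrow> bool" where
  "submodular V f \<longleftrightarrow> (\<forall>A B. A \<subseteq> V \<and> B \<subseteq> V \<longrightarrow> f (A \<union> B) + f (A \<inter> B) \<le> f A + f B)"

definition normalized_nonneg :: "'a set \<Rightarrow> ('a set \<Rightarrow> real) \<Rightarrow> bool" where
  "normalized_nonneg V f \<longleftrightarrow> f {} = 0 \<and> (\<forall>A. A \<subseteq> V \<longrightarrow> 0 \<le> f A)"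

definition marg :: "('a set \<Rightarrow> real) \<Rightarrow> 'a set \<Rightarrow> 'a set \<Rightarrow> real" where
  "marg f X Y = f (X \<union> Y) - f Y"

definition OPT :: "'a set \<Rightarrow> ('a set \<Rightarrow> real) \<Rightarrow> nat \<Rightarrow> real" where
  "OPT V f k = Max {f S | S. S \<subseteq> V \<and> card S \<le> k}"

definition gamma :: real where "gamma = 1/100"
definition eta :: real where "eta = 5 / 100000"

definition dense :: "'a set \<Rightarrow> ('a set \<Rightarrow> real) \<Rightarrow> nat \<Rightarrow> 'a set \<Rightarrow> bool" where
  "dense V f k D \<longleftrightarrow> D \<subseteq> V \<and> real (card D) \<le> eta * real k
      \<and> f D \<ge> (1 - gamma) / 2 * OPT V f k"

text \<open>Stream given by a list es = [e_1,...,e_n] of distinct elements.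
  Element es ! (i-1) is at position i (1-based). Left part: positions i \<le> 0.9 n.\<close>

definition left_part :: "'a list \<Rightarrow> 'a set \<Rightarrow> 'a set" where
  "left_part es T = {x \<in> T. \<exists>i. 1 \<le> i \<and> i \<le> length es \<and> es ! (i - 1) = x
                                \<and> real i \<le> 9/10 * real (length es)}"

definition right_part :: "'a list \<Rightarrow> 'a set \<Rightarrow> 'a set" where
  "right_part es T = T - left_part es T"

definition alg1_step :: "('a set \<Rightarrow> real) \<Rightarrow> nat \<Rightarrow> real \<Rightarrow> nat \<Rightarrow> nat \<Rightarrow> 'a \<Rightarrow> 'a set \<Rightarrow> 'a set" where
  "alg1_step f k opt n i e S =
     (if card S < k \<and>
         ((real i \<le> 9/10 * real n \<and> marg f {e} S \<ge> 100 / real k * opt) \<or>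
          (real i > 9/10 * real n \<and> marg f {e} S \<ge> 1 / (10 * real k) * opt))
      then insert e S else S)"

fun alg1_run :: "('a set \<Rightarrow> real) \<Rightarrow> nat \<Rightarrow> real \<Rightarrow> 'a list \<Rightarrow> nat \<Rightarrow> 'a set" where
  "alg1_run f k opt es 0 = {}"
| "alg1_run f k opt es (Suc m) =
     alg1_step f k opt (length es) (Suc m) (es ! m) (alg1_run f k opt es m)"

definition algorithm1 :: "('a set \<Rightarrow> real) \<Rightarrow> nat \<Rightarrow> real \<Rightarrow> 'a list \<Rightarrow> 'a set" where
  "algorithm1 f k opt es = alg1_run f k opt es (length es)"

end

theory Submission
  imports Defs
begin

lemma R_fin: "finite (alg1_run f k opt es m)"
  by (induction m) (auto simp: alg1_step_def)

lemma R_card: "card (alg1_run f k opt es m) \<le> k"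
proof (induction m)
  case 0 then show ?case by simp
next
  case (Suc m)
  have "card (insert (es ! m) (alg1_run f k opt es m)) \<le> Suc (card (alg1_run f k opt es m))"
    using R_fin card_insert_le_m1 by (metis card_insert_if le_SucI order_refl)
  then show ?case using Suc by (auto simp: alg1_step_def)
qed

lemma R_sub: "m \<le> length es \<Longrightarrow> alg1_run f k opt es m \<subseteq> set es"
proof (induction m)
  case 0 then show ?case by simp
next
  case (Suc m)
  then have "es ! m \<in> set es" by simp
  then show ?case using Suc by (auto simp: alg1_step_def)
qed

lemma R_step_mono: "alg1_run f k opt es m \<subseteq> alg1_run f k opt es (Suc m)"
  by (auto simp: alg1_step_def)

lemma R_mono: "m \<le> m' \<Longrightarrow> alg1_run f k opt es m \<subseteq> alg1_run f k opt es m'"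
proof (induction m' rule: dec_induct)
  case base then show ?case by simp
next
  case (step m') then show ?case using R_step_mono[of f k opt es m'] by blast
qed

lemma marg_dec:
  assumes sub: "submodular V f" and mono: "monotone_sf V f"
    and AB: "A \<subseteq> B" "B \<subseteq> V" and x: "x \<in> V"
  shows "f (insert x B) - f B \<le> f (insert x A) - f A"
proof (cases "x \<in> B")
  case True
  have "insert x A \<subseteq> V" using AB x by auto
  then have "f A \<le> f (insert x A)" using mono unfolding monotone_sf_def by blast
  then show ?thesis using True by (simp add: insert_absorb)
next
  case False
  have "f (insert x A \<union> B) + f (insert x A \<inter> B) \<le> f (insert x A) + f B"
  proof -
    have "insert x A \<subseteq> V" using AB x by auto
    then show ?thesis using sub AB unfolding submodular_def by blast
  qed
  moreover have "insert x A \<union> B = insert x B" using AB by auto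
  moreover have "insert x A \<inter> B = A" using AB False by auto
  ultimately show ?thesis by simp
qed

lemma subadd:
  assumes sub: "submodular V f" and mono: "monotone_sf V f"
    and X: "finite X" "X \<subseteq> V" and S: "S \<subseteq> V"
    and c: "\<And>x. x \<in> X \<Longrightarrow> f (insert x S) - f S \<le> c"
  shows "f (X \<union> S) - f S \<le> real (card X) * c"
  using X c
proof (induction X rule: finite_induct)
  case empty then show ?case by simp
next
  case (insert x X)
  have "f (insert x (X \<union> S)) - f (X \<union> S) \<le> f (insert x S) - f S"
    using marg_dec[OF sub mono, of S "X \<union> S" x] insert.prems S by auto
  also have "\<dots> \<le> c" using insert.prems by auto
  finally have a: "f (insert x (X \<union> S)) - f (X \<union> S) \<le> c" .
  have b: "f (X \<union> S) - f S \<le> real (card X) * c" using insert by auto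
  have "card (insert x X) = Suc (card X)" using insert by simp
  then show ?case using a b by (simp add: algebra_simps)
qed

lemma union2:
  assumes sub: "submodular V f" and mono: "monotone_sf V f"
    and "A \<subseteq> V" "B \<subseteq> V" "S \<subseteq> V"
  shows "f (A \<union> B \<union> S) - f S \<le> (f (A \<union> S) - f S) + (f (B \<union> S) - f S)"
proof -
  have "f ((A \<union> S) \<union> (B \<union> S)) + f ((A \<union> S) \<inter> (B \<union> S)) \<le> f (A \<union> S) + f (B \<union> S)"
    using sub assms unfolding submodular_def by auto
  moreover have "f S \<le> f ((A \<union> S) \<inter> (B \<union> S))"
  proof -
    have "S \<subseteq> (A \<union> S) \<inter> (B \<union> S)" "(A \<union> S) \<inter> (B \<union> S) \<subseteq> V" using assms by auto
    then show ?thesis using mono unfolding monotone_sf_def by blast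
  qed
  moreover have "(A \<union> S) \<union> (B \<union> S) = A \<union> B \<union> S" by auto
  ultimately show ?thesis by simp
qed

lemma opt_ge:
  assumes "finite V" "X \<subseteq> V" "card X \<le> k"
  shows "f X \<le> OPT V f k"
proof -
  have "{f S | S. S \<subseteq> V \<and> card S \<le> k} = f ` {S. S \<subseteq> V \<and> card S \<le> k}" by auto
  moreover have "finite {S. S \<subseteq> V \<and> card S \<le> k}" using assms(1) by auto
  ultimately have "finite {f S | S. S \<subseteq> V \<and> card S \<le> k}" by simp
  then show ?thesis unfolding OPT_def using assms by (intro Max_ge) auto
qed


theorem mainTheorem7:
  fixes V :: "'a set" and f :: "'a set \<Rightarrow> real" and k :: nat
    and es :: "'a list" and D Ostar :: "'a set"
  assumes fin: "finite V"
    and mono: "monotone_sf V f" and sub: "submodular V f" and nn: "normalized_nonneg V f"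
    and kpos: "0 < k" and kn: "k \<le> card V"
    and order: "distinct es" "set es = V"
    and Ddense: "dense V f k D"
    and Osub: "Ostar \<subseteq> V" and Ocard: "card Ostar \<le> k" and Oopt: "f Ostar = OPT V f k"
    and c1: "real (card (left_part es D)) \<le> 0.95 * eta * real k"
    and c2: "f (left_part es D) \<ge> 0.85 * f D"
    and c3: "real (card (right_part es Ostar)) \<le> 0.15 * real k"
    and c4: "marg f (right_part es Ostar) D \<ge> 0.05 * marg f Ostar D"
  shows "f (algorithm1 f k (OPT V f k) es) \<ge> 0.50025 * OPT V f k"
proof -
  define M where "M = OPT V f k"
  define n where "n = length es"
  define R where "R = alg1_run f k M es"
  define m0 where "m0 = nat \<lfloor>9/10 * real n\<rfloor>"
  define SL where "SL = R m0"
  define S where "S = R n"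
  define DL where "DL = left_part es D"
  have S_eq: "algorithm1 f k (OPT V f k) es = S"
    unfolding S_def R_def M_def n_def algorithm1_def by simp
  have pos_iff: "real i \<le> 9/10 * real n \<longleftrightarrow> i \<le> m0" for i
  proof -
    have "i \<le> m0 \<longleftrightarrow> int i \<le> \<lfloor>9/10 * real n\<rfloor>" unfolding m0_def by (simp add: le_nat_iff)
    also have "\<dots> \<longleftrightarrow> real i \<le> 9/10 * real n" by (simp only: le_floor_iff) simp
    finally show ?thesis by simp
  qed
  have m0n: "m0 \<le> n" unfolding m0_def by linarith
  have Rstep: "R (Suc m) = alg1_step f k M n (Suc m) (es ! m) (R m)" for m
    unfolding R_def n_def by simp
  have Rfin: "finite (R m)" for m unfolding R_def by (rule R_fin)
  have Rcard: "card (R m) \<le> k" for m unfolding R_def by (rule R_card)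
  have RsubV: "m \<le> n \<Longrightarrow> R m \<subseteq> V" for m
    unfolding R_def n_def using R_sub order(2) by metis
  have Rmono: "m \<le> m' \<Longrightarrow> R m \<subseteq> R m'" for m m' unfolding R_def by (rule R_mono)
  have f0: "0 \<le> f X" if "X \<subseteq> V" for X using nn that unfolding normalized_nonneg_def by auto
  have fmono: "f X \<le> f Y" if "X \<subseteq> Y" "Y \<subseteq> V" for X Y
    using mono that unfolding monotone_sf_def by blast
  have Mge: "f X \<le> M" if "X \<subseteq> V" "card X \<le> k" for X
    unfolding M_def using opt_ge[OF fin that] .
  have M0: "0 \<le> M" using Mge[of "{}"] nn unfolding normalized_nonneg_def by auto
  have SV: "S \<subseteq> V" unfolding S_def using RsubV by simp
  show ?thesis
  proof (cases "M = 0")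
    case True
    then show ?thesis using S_eq f0[OF SV] M_def by simp
  next
    case False
    then have Mpos: "0 < M" using M0 by simp
    have kr: "0 < real k" using kpos by simp
    have claimA: "m \<le> m0 \<Longrightarrow> 100 / real k * M * real (card (R m)) \<le> f (R m)" for m
    proof (induction m)
      case 0
      then show ?case unfolding R_def using nn unfolding normalized_nonneg_def by simp
    next
      case (Suc m)
      have IH: "100 / real k * M * real (card (R m)) \<le> f (R m)" using Suc by simp
      have le: "real (Suc m) \<le> 9/10 * real n" using Suc.prems pos_iff[of "Suc m"] by blast
      have c0: "0 \<le> 100 / real k * M" using M0 kr by simp
      show ?case
      proof (cases "card (R m) < k \<and> marg f {es ! m} (R m) \<ge> 100 / real k * M")
        case True
        then have R1: "R (Suc m) = insert (es ! m) (R m)"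
          using Rstep[of m] le unfolding alg1_step_def by simp
        have "f (insert (es ! m) (R m)) \<ge> f (R m) + 100 / real k * M"
          using True unfolding marg_def by simp
        moreover have "real (card (insert (es ! m) (R m))) \<le> real (card (R m)) + 1"
          using Rfin[of m] by (simp add: card_insert_if)
        moreover have "100 / real k * M * real (card (insert (es ! m) (R m))) \<le> 100 / real k * M * (real (card (R m)) + 1)"
          using calculation(2) c0 by (rule mult_left_mono)
        moreover have "100 / real k * M * (real (card (R m)) + 1) = 100 / real k * M * real (card (R m)) + 100 / real k * M" by (simp add: distrib_left)
        ultimately show ?thesis unfolding R1 using IH c0 by linarith
      next
        case False
        then have "R (Suc m) = R m"
          using Rstep[of m] le unfolding alg1_step_def by auto
        then show ?thesis using IH by simp
      qed
    qed
    have claimB: "m0 \<le> m \<Longrightarrow> f (R m0) + 1 / (10 * real k) * M * (real (card (R m)) - real (card (R m0))) \<le> f (R m)" for m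
    proof (induction m rule: dec_induct)
      case base then show ?case by simp
    next
      case (step m)
      have gt: "\<not> real (Suc m) \<le> 9/10 * real n" using step.hyps pos_iff[of "Suc m"] by simp
      have c0: "0 \<le> 1 / (10 * real k) * M" using M0 kr by simp
      show ?case
      proof (cases "card (R m) < k \<and> marg f {es ! m} (R m) \<ge> 1 / (10 * real k) * M")
        case True
        then have R1: "R (Suc m) = insert (es ! m) (R m)"
          using Rstep[of m] gt unfolding alg1_step_def by simp
        have "f (insert (es ! m) (R m)) \<ge> f (R m) + 1 / (10 * real k) * M"
          using True unfolding marg_def by simp
        moreover have "real (card (insert (es ! m) (R m))) \<le> real (card (R m)) + 1"
          using Rfin[of m] by (simp add: card_insert_if)
        moreover have "1 / (10 * real k) * M * real (card (insert (es ! m) (R m))) \<le> 1 / (10 * real k) * M * (real (card (R m)) + 1)"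
          using calculation(2) c0 by (rule mult_left_mono)
        moreover have "1 / (10 * real k) * M * (real (card (R m)) + 1) = 1 / (10 * real k) * M * real (card (R m)) + 1 / (10 * real k) * M" by (simp add: distrib_left)
        moreover have "1 / (10 * real k) * M * (real (card (R (Suc m))) - real (card (R m0))) = 1 / (10 * real k) * M * real (card (R (Suc m))) - 1 / (10 * real k) * M * real (card (R m0))" by (simp add: right_diff_distrib)
        moreover have "1 / (10 * real k) * M * (real (card (R m)) - real (card (R m0))) = 1 / (10 * real k) * M * real (card (R m)) - 1 / (10 * real k) * M * real (card (R m0))" by (simp add: right_diff_distrib)
        ultimately show ?thesis using R1 step.IH c0 by (simp only: R1)
      next
        case False
        then have "R (Suc m) = R m"
          using Rstep[of m] gt unfolding alg1_step_def by auto
        then show ?thesis using step.IH by simp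
      qed
    qed
    have SLV: "SL \<subseteq> V" unfolding SL_def using RsubV m0n by simp
    have cardSL: "100 * real (card SL) \<le> real k"
    proof -
      have "100 / real k * M * real (card SL) \<le> M"
        using claimA[of m0] Mge[OF SLV] Rcard unfolding SL_def by (meson order_trans order_refl)
      then have "M * (100 * real (card SL)) \<le> M * real k" using kr
        by (simp add: field_simps)
      then show ?thesis using Mpos by simp
    qed
    then have SLk: "card SL < k" using kpos by linarith
    have DV: "D \<subseteq> V" and Dc: "real (card D) \<le> eta * real k"
      and Df: "f D \<ge> (1 - gamma) / 2 * M"
      using Ddense unfolding dense_def M_def by auto
    have DLD: "DL \<subseteq> D" unfolding DL_def left_part_def by auto
    have DLV: "DL \<subseteq> V" using DLD DV by auto
    have finDL: "finite DL" using DLV fin finite_subset by auto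
    have rej: "\<not> (card (R j) < k \<and>
         ((real (Suc j) \<le> 9/10 * real n \<and> marg f {es ! j} (R j) \<ge> 100 / real k * M) \<or>
          (real (Suc j) > 9/10 * real n \<and> marg f {es ! j} (R j) \<ge> 1 / (10 * real k) * M)))"
      if "es ! j \<notin> R (Suc j)" for j
      using that Rstep[of j] unfolding alg1_step_def by (auto split: if_splits)
    have DLbound: "f (DL \<union> T) - f T \<le> real (card DL) * (100 / real k * M)"
      if T: "SL \<subseteq> T" "T \<subseteq> V" for T
    proof (rule subadd[OF sub mono finDL DLV T(2)])
      fix x assume x: "x \<in> DL"
      then obtain i where i: "1 \<le> i" "i \<le> n" "es ! (i - 1) = x" "real i \<le> 9/10 * real n"
        unfolding DL_def left_part_def n_def by auto
      define j where "j = i - 1"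
      have ij: "Suc j = i" using i(1) j_def by simp
      have xV: "x \<in> V" using x DLV by auto
      show "f (insert x T) - f T \<le> 100 / real k * M"
      proof (cases "x \<in> T")
        case True then show ?thesis using M0 kr by (simp add: insert_absorb)
      next
        case False
        have "Suc j \<le> m0" using ij i(4) pos_iff[of i] by simp
        then have "R (Suc j) \<subseteq> SL" unfolding SL_def using Rmono by simp
        then have "es ! j \<notin> R (Suc j)" using False T i(3) j_def by auto
        moreover have "card (R j) < k"
        proof -
          have "R j \<subseteq> SL" unfolding SL_def using Rmono \<open>Suc j \<le> m0\<close> by simp
          then have "card (R j) \<le> card SL" using Rfin[of m0] card_mono SL_def by metis
          then show ?thesis using SLk by simp
        qed
        ultimately have "marg f {x} (R j) < 100 / real k * M"
          using rej[of j] i ij j_def by auto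
        moreover have "f (insert x T) - f T \<le> f (insert x (R j)) - f (R j)"
        proof (rule marg_dec[OF sub mono _ T(2) xV])
          show "R j \<subseteq> T" using Rmono[of j m0] \<open>Suc j \<le> m0\<close> T(1) SL_def by auto
        qed
        ultimately show ?thesis unfolding marg_def by simp
      qed
    qed
    have DLsmall: "real (card DL) * (100 / real k * M) \<le> 0.95 * eta * 100 * M"
    proof -
      have "real (card DL) * (100 / real k * M) \<le> 0.95 * eta * real k * (100 / real k * M)"
        using c1 M0 kr DL_def by (intro mult_right_mono) auto
      also have "\<dots> = 0.95 * eta * 100 * M" using kr by (simp add: field_simps)
      finally show ?thesis .
    qed
    have fDL: "f DL \<ge> 0.85 * f D" using c2 DL_def by simp
    show ?thesis
    proof (cases "card S < k")
      case False
      then have cS: "card S = k" using Rcard S_def by (metis le_antisym not_less)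
      have B: "f SL + 1 / (10 * real k) * M * (real k - real (card SL)) \<le> f S"
        using claimB[OF m0n] cS unfolding S_def SL_def by simp
      have "1 / (10 * real k) * M * (0.99 * real k) \<le> 1 / (10 * real k) * M * (real k - real (card SL))"
        using cardSL M0 kr by (intro mult_left_mono) auto
      moreover have "1 / (10 * real k) * M * (0.99 * real k) = 0.099 * M" using kr by simp
      ultimately have B2: "f SL + 0.099 * M \<le> f S" using B by linarith
      have "f (DL \<union> SL) - f SL \<le> 0.95 * eta * 100 * M" using DLbound[OF order_refl SLV] DLsmall by linarith
      moreover have "f DL \<le> f (DL \<union> SL)" using fmono DLV SLV by auto
      ultimately have "0.50025 * M \<le> f S" using B2 fDL Df Mpos
        unfolding gamma_def eta_def by (simp add: field_simps)
      then show ?thesis using S_eq M_def by simp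
    next
      case True
      define X where "X = right_part es D \<union> right_part es Ostar"
      have XV: "X \<subseteq> V" unfolding X_def right_part_def using DV Osub by auto
      have finX: "finite X" using XV fin finite_subset by auto
      have Xbound: "f (X \<union> S) - f S \<le> real (card X) * (1 / (10 * real k) * M)"
      proof (rule subadd[OF sub mono finX XV SV])
        fix x assume x: "x \<in> X"
        have xV: "x \<in> V" using x XV by auto
        then obtain j where j: "j < n" "es ! j = x" using order(2) n_def by (metis in_set_conv_nth)
        have notL: "\<not> real (Suc j) \<le> 9/10 * real n"
        proof
          assume h: "real (Suc j) \<le> 9/10 * real n"
          obtain T where T: "x \<in> T" "x \<notin> left_part es T"
            using x unfolding X_def right_part_def by auto
          have "x \<in> left_part es T"
            unfolding left_part_def using T(1) h j n_def by (auto intro!: exI[of _ "Suc j"])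
          then show False using T(2) by simp
        qed
        show "f (insert x S) - f S \<le> 1 / (10 * real k) * M"
        proof (cases "x \<in> S")
          case True then show ?thesis using M0 kr by (simp add: insert_absorb)
        next
          case False
          have "R (Suc j) \<subseteq> S" unfolding S_def using Rmono j by simp
          then have "es ! j \<notin> R (Suc j)" using False j by auto
          moreover have "card (R j) < k"
          proof -
            have "R j \<subseteq> S" unfolding S_def using Rmono j by simp
            then have "card (R j) \<le> card S" using Rfin[of n] card_mono S_def by metis
            then show ?thesis using True by simp
          qed
          ultimately have "marg f {x} (R j) < 1 / (10 * real k) * M"
            using rej[of j] notL j by auto
          moreover have "f (insert x S) - f S \<le> f (insert x (R j)) - f (R j)"
          proof (rule marg_dec[OF sub mono _ SV xV])
            show "R j \<subseteq> S" using Rmono[of j n] j S_def by auto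
          qed
          ultimately show ?thesis unfolding marg_def by simp
        qed
      qed
      have cardX: "real (card X) \<le> eta * real k + 0.15 * real k"
      proof -
        have "card X \<le> card (right_part es D) + card (right_part es Ostar)"
          unfolding X_def by (rule card_Un_le)
        moreover have "card (right_part es D) \<le> card D"
          using DV fin finite_subset unfolding right_part_def by (metis Diff_subset card_mono)
        ultimately show ?thesis using Dc c3 by linarith
      qed
      have Xsmall: "real (card X) * (1 / (10 * real k) * M) \<le> (eta + 0.15) / 10 * M"
      proof -
        have "real (card X) * (1 / (10 * real k) * M) \<le> (eta * real k + 0.15 * real k) * (1 / (10 * real k) * M)"
          using cardX M0 kr by (intro mult_right_mono) auto
        also have "\<dots> = (eta + 0.15) / 10 * M" using kr by (simp add: field_simps)
        finally show ?thesis .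
      qed
      have Xb2: "f (X \<union> S) - f S \<le> (eta + 0.15) / 10 * M" using Xbound Xsmall by linarith
      have U: "f (DL \<union> X \<union> S) - f S \<le> (f (DL \<union> S) - f S) + (f (X \<union> S) - f S)"
        by (rule union2[OF sub mono DLV XV SV])
      have DLS: "f (DL \<union> S) - f S \<le> 0.95 * eta * 100 * M"
        using DLbound[of S] DLsmall SV Rmono[OF m0n] SL_def S_def by fastforce
      have OR: "right_part es Ostar \<subseteq> V" using Osub unfolding right_part_def by auto
      have sub1: "D \<union> right_part es Ostar \<subseteq> DL \<union> X \<union> S"
        unfolding X_def DL_def right_part_def by auto
      have "f (D \<union> right_part es Ostar) \<le> f (DL \<union> X \<union> S)"
        using fmono[OF sub1] DLV XV SV by auto
      moreover have "f (D \<union> right_part es Ostar) = f D + marg f (right_part es Ostar) D"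
        unfolding marg_def by (simp add: Un_commute)
      moreover have "marg f Ostar D \<ge> M - f D"
        using fmono[of Ostar "Ostar \<union> D"] Osub DV Oopt M_def unfolding marg_def by auto
      ultimately have "0.50025 * M \<le> f S" using U DLS Xb2 c4 Df Mpos
        unfolding gamma_def eta_def by (simp add: field_simps)
      then show ?thesis using S_eq M_def by simp
    qed
  qed
qed

end
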